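(* Let $n\ge 1$, let $x_0,\dots,x_n$ be pairwise distinct points of $[-1,1]$, let $\omega\in\mathbb{R}\setminus\{0\}$ and let $f_0,\dots,f_n\in\mathbb{C}$. Then the $(n+1)\times(n+1)$ matrix $T(B+i\omega E)$ is nonsingular. Consequently the collocation system $T(B+i\omega E)c=f$, equivalently $$\sum_{k=0}^n c_k T_k'(x_j)+i\omega\sum_{k=0}^n c_kT_k(x_j)=f_j,\qquad j=0,\dots,n,$$ has a unique solution $c=(c_0,\dots,c_n)^{\mathsf T}\in\mathbb{C}^{n+1}$; that is, there is exactly one polynomial $p(x)=\sum_{k=0}^n c_kT_k(x)$ of degree at most $n$ with $p'(x_j)+i\omega p(x_j)=f_j$ for all $j$.
   Context: $T_k$ denotes the Chebyshev polynomial of the first kind of degree $k$. $T$ is the $(n+1)\times(n+1)$ matrix with rows indexed by nodes and columns by degree: $T_{jk}=T_k(x_j)$, $j,k=0,\dots,n$. $B$ is the Chebyshev spectral differentiation matrix: $B_{ik}=2k/r_i$ if $k>i$ and $i+k$ is odd, and $B_{ik}=0$ otherwise ($0\le i,k\le n$), where $r_0=2$ and $r_i=1$ for $i\ge1$; it satisfies $\frac{d}{dx}\sum_k c_kT_k=\sum_i (Bc)_iT_i$. $E$ is the identity matrix. *)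

theory Defs
  imports "HOL-Analysis.Analysis" "Jordan_Normal_Form.Matrix" "Jordan_Normal_Form.Determinant"
begin

fun cheb :: "nat \<Rightarrow> real \<Rightarrow> real" where
  "cheb 0 x = 1"
| "cheb (Suc 0) x = x"
| "cheb (Suc (Suc k)) x = 2 * x * cheb (Suc k) x - cheb k x"

definition cheb_T :: "nat \<Rightarrow> (nat \<Rightarrow> real) \<Rightarrow> complex mat" where
  "cheb_T n x = mat (Suc n) (Suc n) (\<lambda>(j, k). complex_of_real (cheb k (x j)))"

definition cheb_r :: "nat \<Rightarrow> real" where
  "cheb_r i = (if i = 0 then 2 else 1)"

definition cheb_B :: "nat \<Rightarrow> complex mat" where
  "cheb_B n = mat (Suc n) (Suc n)
     (\<lambda>(i, k). if k > i \<and> odd (i + k) then complex_of_real (2 * real k / cheb_r i) else 0)"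

end

theory Submission
  imports Defs "HOL-Computational_Algebra.Polynomial"
begin

fun chebp :: "nat \<Rightarrow> real poly" where
  "chebp 0 = 1"
| "chebp (Suc 0) = [:0, 1:]"
| "chebp (Suc (Suc k)) = Polynomial.smult 2 (pCons 0 (chebp (Suc k))) - chebp k"

lemma poly_chebp: "poly (chebp k) t = cheb k t"
  by (induction k rule: chebp.induct) (auto simp: algebra_simps)

lemma chebp_deg_coeff: "degree (chebp k) \<le> k \<and> coeff (chebp k) k = (if k = 0 then 1 else 2^(k-1))"
proof (induction k rule: chebp.induct)
  case (3 k)
  have d: "degree (chebp (Suc (Suc k))) \<le> Suc (Suc k)"
    using 3 by (auto intro!: degree_diff_le le_trans[OF degree_smult_le] simp del: chebp.simps(3)
       simp: chebp.simps(3)[of k])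
  have "coeff (chebp k) (Suc (Suc k)) = 0"
    using 3 by (intro coeff_eq_0) auto
  then show ?case using d 3 by auto
qed auto

definition chebc :: "nat \<Rightarrow> complex poly" where
  "chebc k = map_poly complex_of_real (chebp k)"

lemma poly_of_real_map: "poly (map_poly of_real p) (of_real t) = (of_real (poly p t) :: complex)"
  by (induction p) (auto simp: map_poly_pCons)

lemma pderiv_of_real_map: "pderiv (map_poly (of_real :: real \<Rightarrow> complex) p) = map_poly of_real (pderiv p)"
  by (rule poly_eqI) (simp add: coeff_pderiv coeff_map_poly)

lemma poly_chebc: "poly (chebc k) (of_real t) = of_real (cheb k t)"
  by (simp add: chebc_def poly_of_real_map poly_chebp)

lemma deriv_cheb: "deriv (cheb k) t = poly (pderiv (chebp k)) t"
proof -
  have "cheb k = (\<lambda>t. poly (chebp k) t)" by (simp add: poly_chebp)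
  then show ?thesis by (metis DERIV_imp_deriv poly_DERIV)
qed

lemma poly_pderiv_chebc: "poly (pderiv (chebc k)) (of_real t) = of_real (deriv (cheb k) t)"
  by (simp add: chebc_def pderiv_of_real_map poly_of_real_map deriv_cheb)

lemma chebc_deg_coeff: "degree (chebc k) \<le> k" "coeff (chebc k) k \<noteq> 0"
  using chebp_deg_coeff[of k] by (auto simp: chebc_def degree_map_poly coeff_map_poly)

lemma chebc_indep: "(\<Sum>k\<le>m. Polynomial.smult (d k) (chebc k)) = 0 \<Longrightarrow> \<forall>k\<le>m. d k = 0"
proof (induction m)
  case 0 then show ?case using chebc_deg_coeff(2)[of 0] by (auto simp: chebc_def)
next
  case (Suc m)
  have deg: "degree (\<Sum>k\<le>m. Polynomial.smult (d k) (chebc k)) \<le> m"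
    by (intro degree_sum_le) (auto intro: le_trans[OF degree_smult_le] le_trans[OF chebc_deg_coeff(1)])
  have "coeff (\<Sum>k\<le>Suc m. Polynomial.smult (d k) (chebc k)) (Suc m) = 0" using Suc.prems by simp
  then have "d (Suc m) * coeff (chebc (Suc m)) (Suc m) + coeff (\<Sum>k\<le>m. Polynomial.smult (d k) (chebc k)) (Suc m) = 0"
    by (simp add: add.commute)
  moreover have "coeff (\<Sum>k\<le>m. Polynomial.smult (d k) (chebc k)) (Suc m) = 0"
    using deg by (intro coeff_eq_0) auto
  ultimately have "d (Suc m) = 0" using chebc_deg_coeff(2)[of "Suc m"] by simp
  with Suc.prems have "(\<Sum>k\<le>m. Polynomial.smult (d k) (chebc k)) = 0" by simp
  with Suc.IH \<open>d (Suc m) = 0\<close> show ?case using le_Suc_eq by auto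
qed



lemma det_solve:
  fixes A :: "complex mat"
  assumes A: "A \<in> carrier_mat m m" and d: "det A \<noteq> 0"
  shows "invertible_mat A \<and> (\<forall>f \<in> carrier_vec m. \<exists>!c. c \<in> carrier_vec m \<and> A *\<^sub>v c = f)"
proof -
  from det_non_zero_imp_unit[OF A d, of undefined]
  obtain B where B: "B \<in> carrier_mat m m" "A * B = 1\<^sub>m m" "B * A = 1\<^sub>m m"
    unfolding Units_def ring_mat_def by auto
  have inv: "invertible_mat A" using A B unfolding invertible_mat_def inverts_mat_def by auto
  have "\<exists>!c. c \<in> carrier_vec m \<and> A *\<^sub>v c = f" if f: "f \<in> carrier_vec m" for f
  proof (rule ex1I[of _ "B *\<^sub>v f"])
    have "A *\<^sub>v (B *\<^sub>v f) = (A * B) *\<^sub>v f"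
      by (rule assoc_mult_mat_vec[symmetric, OF A B(1) f])
    then show "B *\<^sub>v f \<in> carrier_vec m \<and> A *\<^sub>v (B *\<^sub>v f) = f" using B f by simp
  next
    fix c assume c: "c \<in> carrier_vec m \<and> A *\<^sub>v c = f"
    then have "B *\<^sub>v (A *\<^sub>v c) = B *\<^sub>v f" by simp
    moreover have "B *\<^sub>v (A *\<^sub>v c) = (B * A) *\<^sub>v c"
      using c by (intro assoc_mult_mat_vec[symmetric, OF B(1) A]) auto
    ultimately show "c = B *\<^sub>v f" using B c by simp
  qed
  with inv show ?thesis by blast
qed

lemma inj_det:
  fixes A :: "complex mat"
  assumes A: "A \<in> carrier_mat m m"
    and inj: "\<And>v. v \<in> carrier_vec m \<Longrightarrow> A *\<^sub>v v = 0\<^sub>v m \<Longrightarrow> v = 0\<^sub>v m"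
  shows "det A \<noteq> 0"
  using det_0_iff_vec_prod_zero[OF A] inj by blast

lemma roots_zero:
  fixes Q :: "complex poly"
  assumes deg: "degree Q \<le> n" and inj: "inj_on x {0..n}"
    and r: "\<forall>j\<le>n. poly Q (complex_of_real (x j)) = 0"
  shows "Q = 0"
proof (rule ccontr)
  assume Q: "Q \<noteq> 0"
  let ?S = "(\<lambda>j. complex_of_real (x j)) ` {0..n}"
  have sub: "?S \<subseteq> {z. poly Q z = 0}" using r by auto
  have fin: "finite {z. poly Q z = 0}" using poly_roots_finite[OF Q] .
  have "inj_on (\<lambda>j. complex_of_real (x j)) {0..n}"
    using inj unfolding inj_on_def by auto
  then have cS: "card ?S = Suc n" by (simp add: card_image)
  have "card ?S \<le> card {z. poly Q z = 0}" using card_mono[OF fin sub] by simp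
  also have "\<dots> \<le> degree Q" using card_poly_roots_bound[OF Q] .
  finally show False using deg cS by simp
qed

lemma deriv_smult_zero:
  fixes p :: "complex poly"
  assumes "pderiv p + Polynomial.smult a p = 0" and "a \<noteq> 0"
  shows "p = 0"
proof (rule ccontr)
  assume p: "p \<noteq> 0"
  have "coeff (pderiv p + Polynomial.smult a p) (degree p) = 0" using assms by simp
  moreover have "coeff (pderiv p) (degree p) = 0"
    by (simp add: coeff_pderiv coeff_eq_0)
  ultimately have "a * lead_coeff p = 0" by simp
  with assms p show False by simp
qed

definition PP :: "nat \<Rightarrow> complex vec \<Rightarrow> complex poly" where
  "PP n c = (\<Sum>k\<le>n. Polynomial.smult (c $ k) (chebc k))"

lemma poly_PP: "poly (PP n c) (of_real t) = (\<Sum>k\<le>n. c $ k * of_real (cheb k t))"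
  by (simp add: PP_def poly_sum poly_chebc)

lemma pderiv_sum': "pderiv (sum f A) = (\<Sum>x\<in>A. pderiv (f x))"
  using higher_pderiv_sum[of 1 f A] by simp

lemma poly_pderiv_PP: "poly (pderiv (PP n c)) (of_real t) = (\<Sum>k\<le>n. c $ k * of_real (deriv (cheb k) t))"
  by (simp add: PP_def pderiv_sum' pderiv_smult poly_sum poly_pderiv_chebc)

lemma degree_PP: "degree (PP n c) \<le> n"
  unfolding PP_def
  by (intro degree_sum_le) (auto intro: le_trans[OF degree_smult_le] le_trans[OF chebc_deg_coeff(1)])

lemma PP_zero: "c \<in> carrier_vec (Suc n) \<Longrightarrow> PP n c = 0 \<Longrightarrow> c = 0\<^sub>v (Suc n)"
  using chebc_indep[of "\<lambda>k. c $ k" n] unfolding PP_def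
  by (intro eq_vecI) auto

lemma sum_Suc_atMost: "(\<Sum>k\<in>{0..<Suc n}. g k) = (\<Sum>k\<le>n. g k)"
  by (simp add: atLeast0LessThan lessThan_Suc_atMost)

lemma ex1_forward_aux:
  assumes "\<exists>!c. c \<in> C \<and> P c" and "\<And>c. c \<in> C \<Longrightarrow> P c = Q c"
  shows "\<exists>!c. c \<in> C \<and> Q c"
  using assms by blast

theorem mainTheorem1:
  fixes n :: nat and x :: "nat \<Rightarrow> real" and \<omega> :: real and f :: "complex vec"
  assumes "n \<ge> 1"
    and "inj_on x {0..n}"
    and "\<forall>j\<le>n. x j \<in> {-1..1}"
    and "\<omega> \<noteq> 0"
    and "f \<in> carrier_vec (Suc n)"
  shows "invertible_mat (cheb_T n x * (cheb_B n + (\<i> * complex_of_real \<omega>) \<cdot>\<^sub>m 1\<^sub>m (Suc n)))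
    \<and> (\<exists>!c. c \<in> carrier_vec (Suc n) \<and>
           (cheb_T n x * (cheb_B n + (\<i> * complex_of_real \<omega>) \<cdot>\<^sub>m 1\<^sub>m (Suc n))) *\<^sub>v c = f)
    \<and> (\<exists>!c. c \<in> carrier_vec (Suc n) \<and>
           (\<forall>j\<le>n. (\<Sum>k\<le>n. c $ k * complex_of_real (deriv (cheb k) (x j)))
                   + \<i> * complex_of_real \<omega> * (\<Sum>k\<le>n. c $ k * complex_of_real (cheb k (x j))) = f $ j))"
proof -
  let ?a = "\<i> * complex_of_real \<omega>"
  define T where "T = cheb_T n x"
  define D where "D = cheb_B n + ?a \<cdot>\<^sub>m 1\<^sub>m (Suc n)"
  define M2 where "M2 = mat (Suc n) (Suc n) (\<lambda>(j, k). complex_of_real (deriv (cheb k) (x j))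
        + ?a * complex_of_real (cheb k (x j)))"
  have a0: "?a \<noteq> 0" using assms(4) by simp
  have Tc: "T \<in> carrier_mat (Suc n) (Suc n)" by (simp add: T_def cheb_T_def)
  have Dc: "D \<in> carrier_mat (Suc n) (Suc n)" by (simp add: D_def cheb_B_def)
  have M2c: "M2 \<in> carrier_mat (Suc n) (Suc n)" by (simp add: M2_def)
  have Tv: "(T *\<^sub>v c) $ j = poly (PP n c) (of_real (x j))"
    if "c \<in> carrier_vec (Suc n)" "j \<le> n" for c j
    using that by (simp add: T_def cheb_T_def mult_mat_vec_def scalar_prod_def poly_PP atLeast0LessThan lessThan_Suc_atMost
        mult.commute)
  have M2v: "(M2 *\<^sub>v c) $ j = (\<Sum>k\<le>n. c $ k * complex_of_real (deriv (cheb k) (x j)))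
                   + ?a * (\<Sum>k\<le>n. c $ k * complex_of_real (cheb k (x j)))"
    if "c \<in> carrier_vec (Suc n)" "j \<le> n" for c j
    using that by (simp add: M2_def mult_mat_vec_def scalar_prod_def atLeast0LessThan lessThan_Suc_atMost
        algebra_simps sum.distrib sum_distrib_left)
  have detT: "det T \<noteq> 0"
  proof (rule inj_det[OF Tc])
    fix c assume c: "c \<in> carrier_vec (Suc n)" and z: "T *\<^sub>v c = 0\<^sub>v (Suc n)"
    have "\<forall>j\<le>n. poly (PP n c) (complex_of_real (x j)) = 0"
    proof (intro allI impI)
      fix j assume j: "j \<le> n"
      have "(T *\<^sub>v c) $ j = 0" using z j by simp
      then show "poly (PP n c) (complex_of_real (x j)) = 0" using Tv[OF c j] by simp
    qed
    then have "PP n c = 0" using roots_zero[OF degree_PP assms(2)] by blast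
    then show "c = 0\<^sub>v (Suc n)" using PP_zero[OF c] by simp
  qed
  have "upper_triangular D"
    unfolding upper_triangular_def using Dc by (auto simp: D_def cheb_B_def)
  moreover have "diag_mat D = map (\<lambda>i. ?a) [0..<Suc n]"
    unfolding diag_mat_def using Dc by (intro map_cong) (auto simp: D_def cheb_B_def simp del: upt_Suc)
  ultimately have "det D = ?a ^ Suc n" using det_upper_triangular[OF _ Dc]
    by (simp add: map_replicate_const del: upt_Suc)
  then have detD: "det D \<noteq> 0" using a0 by simp
  have "det (T * D) \<noteq> 0" using det_mult[OF Tc Dc] detT detD by simp
  from det_solve[OF mult_carrier_mat[OF Tc Dc] this]
  have P1: "invertible_mat (T * D) \<and> (\<exists>!c. c \<in> carrier_vec (Suc n) \<and> (T * D) *\<^sub>v c = f)"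
    using assms(5) by blast
  have detM2: "det M2 \<noteq> 0"
  proof (rule inj_det[OF M2c])
    fix c assume c: "c \<in> carrier_vec (Suc n)" and z: "M2 *\<^sub>v c = 0\<^sub>v (Suc n)"
    have "\<forall>j\<le>n. poly (pderiv (PP n c) + Polynomial.smult ?a (PP n c)) (complex_of_real (x j)) = 0"
    proof (intro allI impI)
      fix j assume j: "j \<le> n"
      have "(M2 *\<^sub>v c) $ j = 0" using z j by simp
      then show "poly (pderiv (PP n c) + Polynomial.smult ?a (PP n c)) (complex_of_real (x j)) = 0"
        using M2v[OF c j] by (simp add: poly_PP poly_pderiv_PP)
    qed
    moreover have "degree (pderiv (PP n c) + Polynomial.smult ?a (PP n c)) \<le> n"
      using degree_PP[of n c]
      by (intro degree_add_le le_trans[OF degree_smult_le]) (auto simp: degree_pderiv)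
    ultimately have "pderiv (PP n c) + Polynomial.smult ?a (PP n c) = 0"
      using roots_zero[OF _ assms(2)] by blast
    then have "PP n c = 0" using deriv_smult_zero a0 by blast
    then show "c = 0\<^sub>v (Suc n)" using PP_zero[OF c] by simp
  qed
  from det_solve[OF M2c detM2] assms(5)
  have "\<exists>!c. c \<in> carrier_vec (Suc n) \<and> M2 *\<^sub>v c = f" by blast
  moreover have equiv: "(M2 *\<^sub>v c = f) = (\<forall>j\<le>n. (\<Sum>k\<le>n. c $ k * complex_of_real (deriv (cheb k) (x j)))
                   + ?a * (\<Sum>k\<le>n. c $ k * complex_of_real (cheb k (x j))) = f $ j)"
    if c: "c \<in> carrier_vec (Suc n)" for c
  proof
    assume "M2 *\<^sub>v c = f" then show "\<forall>j\<le>n. (\<Sum>k\<le>n. c $ k * complex_of_real (deriv (cheb k) (x j)))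
                   + ?a * (\<Sum>k\<le>n. c $ k * complex_of_real (cheb k (x j))) = f $ j" using M2v[OF c] by auto
  next
    assume h: "\<forall>j\<le>n. (\<Sum>k\<le>n. c $ k * complex_of_real (deriv (cheb k) (x j)))
                   + ?a * (\<Sum>k\<le>n. c $ k * complex_of_real (cheb k (x j))) = f $ j"
    show "M2 *\<^sub>v c = f"
    proof (rule eq_vecI)
      show "dim_vec (M2 *\<^sub>v c) = dim_vec f" using assms(5) M2c by simp
      fix j assume "j < dim_vec f"
      then have j: "j \<le> n" using assms(5) by simp
      show "(M2 *\<^sub>v c) $ j = f $ j" using M2v[OF c j] h j by simp
    qed
  qed
  ultimately have P3: "\<exists>!c. c \<in> carrier_vec (Suc n) \<and>
           (\<forall>j\<le>n. (\<Sum>k\<le>n. c $ k * complex_of_real (deriv (cheb k) (x j)))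
                   + ?a * (\<Sum>k\<le>n. c $ k * complex_of_real (cheb k (x j))) = f $ j)"
    by (rule ex1_forward_aux)
  show ?thesis unfolding T_def[symmetric] D_def[symmetric]
    by (rule conjI[OF conjunct1[OF P1] conjI[OF conjunct2[OF P1] P3]])
qed

end
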